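(* Let $C$ be a smooth non-hyperelliptic genus $4$ curve, let $S$ be the associated K3 surface with order-$3$ deck transformation $\sigma$, and let $M,N\subset H^2(S,\mathbb{Z})$ and $\eta$ be as below. Then for every automorphism $\zeta$ of the lattice $N$, exactly one of $\zeta,-\zeta$ is the restriction of an automorphism of $H^2(S,\mathbb{Z})$ that fixes $\eta$.
   Context: $C$ is canonically embedded in $\mathbb{P}^3$ as $Q\cap K$, where $Q$ is a quadric (smooth or with one node) and $K$ a cubic surface. $S$ is the K3 surface that is the triple cyclic cover of $Q$ (of its minimal resolution if $Q$ is singular) branched along $C$, and $\sigma$ is a generator of the deck group. $M=H^2(S,\mathbb{Z})^{\sigma^*}$ is isometric to $U(3)$, where $U$ is the hyperbolic plane with basis $x_1,x_2$, $x_i^2=0$, $x_1x_2=1$, and $U(3)$ means the form scaled by $3$. $\eta\in M$ is the class corresponding to $x_1+x_2$, the pullback of the hyperplane class of $Q$. $N=M^\perp$ has rank $20$. Lattice automorphisms are isometries. *)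

theory Defs
  imports Main
begin

text \<open>The K3 lattice U^3 + E8(-1)^2, realised on Z^22.  Vectors are functions
  nat => int supported on {..<22}; coordinates 0..5 are three hyperbolic planes U,
  coordinates 6..13 and 14..21 are two copies of E8(-1) (simple-root bases).\<close>

type_synonym zvec = "nat \<Rightarrow> int"

definition K3vecs :: "zvec set" where
  "K3vecs = {v. \<forall>i\<ge>22. v i = 0}"

definition vadd :: "zvec \<Rightarrow> zvec \<Rightarrow> zvec" where
  "vadd v w = (\<lambda>i. v i + w i)"

definition vneg :: "zvec \<Rightarrow> zvec" where
  "vneg v = (\<lambda>i. - v i)"

definition vsmul :: "int \<Rightarrow> zvec \<Rightarrow> zvec" where
  "vsmul n v = (\<lambda>i. n * v i)"

definition e8_edge :: "nat \<Rightarrow> nat \<Rightarrow> bool" where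
  "e8_edge a b = ({a, b} \<in> {{0,2},{2,3},{3,4},{4,5},{5,6},{6,7},{1,3}})"

definition e8neg :: "nat \<Rightarrow> nat \<Rightarrow> int" where
  "e8neg a b = (if a = b then -2 else if e8_edge a b then 1 else 0)"

definition K3gram :: "nat \<Rightarrow> nat \<Rightarrow> int" where
  "K3gram i j =
     (if i < 6 \<and> j < 6 then (if i div 2 = j div 2 \<and> i \<noteq> j then 1 else 0)
      else if 6 \<le> i \<and> i < 14 \<and> 6 \<le> j \<and> j < 14 then e8neg (i - 6) (j - 6)
      else if 14 \<le> i \<and> i < 22 \<and> 14 \<le> j \<and> j < 22 then e8neg (i - 14) (j - 14)
      else 0)"

definition K3form :: "zvec \<Rightarrow> zvec \<Rightarrow> int" where
  "K3form v w = (\<Sum>i<22. \<Sum>j<22. K3gram i j * v i * w j)"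

definition is_isometry :: "zvec set \<Rightarrow> (zvec \<Rightarrow> zvec) \<Rightarrow> bool" where
  "is_isometry A f \<longleftrightarrow> bij_betw f A A \<and>
     (\<forall>v\<in>A. \<forall>w\<in>A. f (vadd v w) = vadd (f v) (f w) \<and> K3form (f v) (f w) = K3form v w)"

definition span2 :: "zvec \<Rightarrow> zvec \<Rightarrow> zvec set" where
  "span2 x y = {vadd (vsmul a x) (vsmul b y) | a b. True}"

definition primitive_in_K3 :: "zvec set \<Rightarrow> bool" where
  "primitive_in_K3 M \<longleftrightarrow> (\<forall>v\<in>K3vecs. \<forall>n::int. n \<noteq> 0 \<and> vsmul n v \<in> M \<longrightarrow> v \<in> M)"

definition orth2 :: "zvec \<Rightarrow> zvec \<Rightarrow> zvec set" where
  "orth2 x y = {v \<in> K3vecs. K3form v x = 0 \<and> K3form v y = 0}"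

definition extends_fixing :: "zvec set \<Rightarrow> zvec \<Rightarrow> (zvec \<Rightarrow> zvec) \<Rightarrow> bool" where
  "extends_fixing N eta \<zeta> \<longleftrightarrow>
     (\<exists>g. is_isometry K3vecs g \<and> g eta = eta \<and> (\<forall>v\<in>N. g v = \<zeta> v))"

end

theory Submission
  imports Defs "HOL-Library.Function_Algebras"
begin


lemma e8_edge_iff: "e8_edge a b \<longleftrightarrow> (a,b) \<in> {(0,2),(2,0),(2,3),(3,2),(3,4),(4,3),(4,5),(5,4),(5,6),(6,5),(6,7),(7,6),(1,3),(3,1)}"
  unfolding e8_edge_def by (auto simp: doubleton_eq_iff)

lemma lt22: "{..<22::nat} = {0,1,2,3,4,5,6,7,8,9,10,11,12,13,14,15,16,17,18,19,20,21}"
  by (auto; presburger)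

lemma K3form_expl: "K3form v w = (v 0 * w 1 + v 1 * w 0) + (v 2 * w 3 + v 3 * w 2) + (v 4 * w 5 + v 5 * w 4) + (- 2 * v 6 * w 6) + (- 2 * v 7 * w 7) + (- 2 * v 8 * w 8) + (- 2 * v 9 * w 9) + (- 2 * v 10 * w 10) + (- 2 * v 11 * w 11) + (- 2 * v 12 * w 12) + (- 2 * v 13 * w 13) + (v 6 * w 8 + v 8 * w 6) + (v 8 * w 9 + v 9 * w 8) + (v 9 * w 10 + v 10 * w 9) + (v 10 * w 11 + v 11 * w 10) + (v 11 * w 12 + v 12 * w 11) + (v 12 * w 13 + v 13 * w 12) + (v 7 * w 9 + v 9 * w 7) + (- 2 * v 14 * w 14) + (- 2 * v 15 * w 15) + (- 2 * v 16 * w 16) + (- 2 * v 17 * w 17) + (- 2 * v 18 * w 18) + (- 2 * v 19 * w 19) + (- 2 * v 20 * w 20) + (- 2 * v 21 * w 21) + (v 14 * w 16 + v 16 * w 14) + (v 16 * w 17 + v 17 * w 16) + (v 17 * w 18 + v 18 * w 17) + (v 18 * w 19 + v 19 * w 18) + (v 19 * w 20 + v 20 * w 19) + (v 20 * w 21 + v 21 * w 20) + (v 15 * w 17 + v 17 * w 15)"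
  unfolding K3form_def lt22
  by (simp add: K3gram_def e8neg_def e8_edge_iff algebra_simps)

lemma E8_solve:
  fixes z0 z1 z2 z3 z4 z5 z6 z7 y0 y1 y2 y3 y4 y5 y6 y7 :: int
  assumes "- 2 * z0 + z2 = y0"
    and "- 2 * z1 + z3 = y1"
    and "- 2 * z2 + z0 + z3 = y2"
    and "- 2 * z3 + z2 + z4 + z1 = y3"
    and "- 2 * z4 + z3 + z5 = y4"
    and "- 2 * z5 + z4 + z6 = y5"
    and "- 2 * z6 + z5 + z7 = y6"
    and "- 2 * z7 + z6 = y7"
  shows "z0 = (-4) * y0 + (-5) * y1 + (-7) * y2 + (-10) * y3 + (-8) * y4 + (-6) * y5 + (-4) * y6 + (-2) * y7"
    and "z1 = (-5) * y0 + (-8) * y1 + (-10) * y2 + (-15) * y3 + (-12) * y4 + (-9) * y5 + (-6) * y6 + (-3) * y7"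
    and "z2 = (-7) * y0 + (-10) * y1 + (-14) * y2 + (-20) * y3 + (-16) * y4 + (-12) * y5 + (-8) * y6 + (-4) * y7"
    and "z3 = (-10) * y0 + (-15) * y1 + (-20) * y2 + (-30) * y3 + (-24) * y4 + (-18) * y5 + (-12) * y6 + (-6) * y7"
    and "z4 = (-8) * y0 + (-12) * y1 + (-16) * y2 + (-24) * y3 + (-20) * y4 + (-15) * y5 + (-10) * y6 + (-5) * y7"
    and "z5 = (-6) * y0 + (-9) * y1 + (-12) * y2 + (-18) * y3 + (-15) * y4 + (-12) * y5 + (-8) * y6 + (-4) * y7"
    and "z6 = (-4) * y0 + (-6) * y1 + (-8) * y2 + (-12) * y3 + (-10) * y4 + (-8) * y5 + (-6) * y6 + (-3) * y7"
    and "z7 = (-2) * y0 + (-3) * y1 + (-4) * y2 + (-6) * y3 + (-5) * y4 + (-4) * y5 + (-3) * y6 + (-2) * y7"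
  by (simp_all add: assms[symmetric] algebra_simps)

lemma vadd_eq[simp]: "vadd v w = v + w" by (rule ext) (simp add: vadd_def)
lemma vneg_eq[simp]: "vneg v = - v" by (rule ext) (simp add: vneg_def)
lemma of_int_fun_apply[simp]: "(of_int k :: nat \<Rightarrow> int) i = k"
  by (cases k) (simp_all add: of_nat_fun)
lemma vsmul_eq[simp]: "vsmul k v = of_int k * v" by (rule ext) (simp add: vsmul_def)

lemma B_add1[simp]: "K3form (v + w) u = K3form v u + K3form w u" by (simp add: K3form_expl algebra_simps)
lemma B_add2[simp]: "K3form u (v + w) = K3form u v + K3form u w" by (simp add: K3form_expl algebra_simps)
lemma B_diff1[simp]: "K3form (v - w) u = K3form v u - K3form w u" by (simp add: K3form_expl algebra_simps)
lemma B_diff2[simp]: "K3form u (v - w) = K3form u v - K3form u w" by (simp add: K3form_expl algebra_simps)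
lemma B_neg1[simp]: "K3form (- v) u = - K3form v u" by (simp add: K3form_expl algebra_simps)
lemma B_neg2[simp]: "K3form u (- v) = - K3form u v" by (simp add: K3form_expl algebra_simps)
lemma B_int1[simp]: "K3form (of_int k * v) u = k * K3form v u" by (simp add: K3form_expl algebra_simps)
lemma B_int2[simp]: "K3form u (of_int k * v) = k * K3form u v" by (simp add: K3form_expl algebra_simps)
lemma B_num1[simp]: "K3form (numeral k * v) u = numeral k * K3form v u" by (simp add: K3form_expl algebra_simps)
lemma B_num2[simp]: "K3form u (numeral k * v) = numeral k * K3form u v" by (simp add: K3form_expl algebra_simps)
lemma B_zero1[simp]: "K3form 0 u = 0" by (simp add: K3form_expl)
lemma B_zero2[simp]: "K3form u 0 = 0" by (simp add: K3form_expl)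
lemma B_sym: "K3form v w = K3form w v" by (simp add: K3form_expl algebra_simps)

lemma L_add[intro]: "v \<in> K3vecs \<Longrightarrow> w \<in> K3vecs \<Longrightarrow> v + w \<in> K3vecs" by (simp add: K3vecs_def)
lemma L_diff[intro]: "v \<in> K3vecs \<Longrightarrow> w \<in> K3vecs \<Longrightarrow> v - w \<in> K3vecs" by (simp add: K3vecs_def)
lemma L_neg[intro]: "v \<in> K3vecs \<Longrightarrow> - v \<in> K3vecs" by (simp add: K3vecs_def)
lemma L_mult[intro]: "v \<in> K3vecs \<Longrightarrow> c * v \<in> K3vecs" by (simp add: K3vecs_def)
lemma L_zero[intro]: "0 \<in> K3vecs" by (simp add: K3vecs_def)

definition ev :: "nat \<Rightarrow> zvec" where "ev j = (\<lambda>i. if i = j then 1 else 0)"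
lemma ev_L: "j < 22 \<Longrightarrow> ev j \<in> K3vecs" by (simp add: K3vecs_def ev_def)

lemma gram_div:
  fixes z :: zvec and m :: int
  assumes zL: "z \<in> K3vecs" and e: "\<And>j. j < 22 \<Longrightarrow> m dvd K3form (ev j) z"
  shows "m dvd z i"
proof -
  have d0: "m dvd z 0" using e[of 1] by (simp add: K3form_expl ev_def)
  have d1: "m dvd z 1" using e[of 0] by (simp add: K3form_expl ev_def)
  have d2: "m dvd z 2" using e[of 3] by (simp add: K3form_expl ev_def)
  have d3: "m dvd z 3" using e[of 2] by (simp add: K3form_expl ev_def)
  have d4: "m dvd z 4" using e[of 5] by (simp add: K3form_expl ev_def)
  have d5: "m dvd z 5" using e[of 4] by (simp add: K3form_expl ev_def)
  have q6: "z 6 = (-4) * K3form (ev 6) z + (-5) * K3form (ev 7) z + (-7) * K3form (ev 8) z + (-10) * K3form (ev 9) z + (-8) * K3form (ev 10) z + (-6) * K3form (ev 11) z + (-4) * K3form (ev 12) z + (-2) * K3form (ev 13) z" by (simp add: K3form_expl ev_def algebra_simps)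
  have d6: "m dvd z 6" unfolding q6 by (intro dvd_add dvd_mult e) simp_all
  have q7: "z 7 = (-5) * K3form (ev 6) z + (-8) * K3form (ev 7) z + (-10) * K3form (ev 8) z + (-15) * K3form (ev 9) z + (-12) * K3form (ev 10) z + (-9) * K3form (ev 11) z + (-6) * K3form (ev 12) z + (-3) * K3form (ev 13) z" by (simp add: K3form_expl ev_def algebra_simps)
  have d7: "m dvd z 7" unfolding q7 by (intro dvd_add dvd_mult e) simp_all
  have q8: "z 8 = (-7) * K3form (ev 6) z + (-10) * K3form (ev 7) z + (-14) * K3form (ev 8) z + (-20) * K3form (ev 9) z + (-16) * K3form (ev 10) z + (-12) * K3form (ev 11) z + (-8) * K3form (ev 12) z + (-4) * K3form (ev 13) z" by (simp add: K3form_expl ev_def algebra_simps)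
  have d8: "m dvd z 8" unfolding q8 by (intro dvd_add dvd_mult e) simp_all
  have q9: "z 9 = (-10) * K3form (ev 6) z + (-15) * K3form (ev 7) z + (-20) * K3form (ev 8) z + (-30) * K3form (ev 9) z + (-24) * K3form (ev 10) z + (-18) * K3form (ev 11) z + (-12) * K3form (ev 12) z + (-6) * K3form (ev 13) z" by (simp add: K3form_expl ev_def algebra_simps)
  have d9: "m dvd z 9" unfolding q9 by (intro dvd_add dvd_mult e) simp_all
  have q10: "z 10 = (-8) * K3form (ev 6) z + (-12) * K3form (ev 7) z + (-16) * K3form (ev 8) z + (-24) * K3form (ev 9) z + (-20) * K3form (ev 10) z + (-15) * K3form (ev 11) z + (-10) * K3form (ev 12) z + (-5) * K3form (ev 13) z" by (simp add: K3form_expl ev_def algebra_simps)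
  have d10: "m dvd z 10" unfolding q10 by (intro dvd_add dvd_mult e) simp_all
  have q11: "z 11 = (-6) * K3form (ev 6) z + (-9) * K3form (ev 7) z + (-12) * K3form (ev 8) z + (-18) * K3form (ev 9) z + (-15) * K3form (ev 10) z + (-12) * K3form (ev 11) z + (-8) * K3form (ev 12) z + (-4) * K3form (ev 13) z" by (simp add: K3form_expl ev_def algebra_simps)
  have d11: "m dvd z 11" unfolding q11 by (intro dvd_add dvd_mult e) simp_all
  have q12: "z 12 = (-4) * K3form (ev 6) z + (-6) * K3form (ev 7) z + (-8) * K3form (ev 8) z + (-12) * K3form (ev 9) z + (-10) * K3form (ev 10) z + (-8) * K3form (ev 11) z + (-6) * K3form (ev 12) z + (-3) * K3form (ev 13) z" by (simp add: K3form_expl ev_def algebra_simps)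
  have d12: "m dvd z 12" unfolding q12 by (intro dvd_add dvd_mult e) simp_all
  have q13: "z 13 = (-2) * K3form (ev 6) z + (-3) * K3form (ev 7) z + (-4) * K3form (ev 8) z + (-6) * K3form (ev 9) z + (-5) * K3form (ev 10) z + (-4) * K3form (ev 11) z + (-3) * K3form (ev 12) z + (-2) * K3form (ev 13) z" by (simp add: K3form_expl ev_def algebra_simps)
  have d13: "m dvd z 13" unfolding q13 by (intro dvd_add dvd_mult e) simp_all
  have q14: "z 14 = (-4) * K3form (ev 14) z + (-5) * K3form (ev 15) z + (-7) * K3form (ev 16) z + (-10) * K3form (ev 17) z + (-8) * K3form (ev 18) z + (-6) * K3form (ev 19) z + (-4) * K3form (ev 20) z + (-2) * K3form (ev 21) z" by (simp add: K3form_expl ev_def algebra_simps)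
  have d14: "m dvd z 14" unfolding q14 by (intro dvd_add dvd_mult e) simp_all
  have q15: "z 15 = (-5) * K3form (ev 14) z + (-8) * K3form (ev 15) z + (-10) * K3form (ev 16) z + (-15) * K3form (ev 17) z + (-12) * K3form (ev 18) z + (-9) * K3form (ev 19) z + (-6) * K3form (ev 20) z + (-3) * K3form (ev 21) z" by (simp add: K3form_expl ev_def algebra_simps)
  have d15: "m dvd z 15" unfolding q15 by (intro dvd_add dvd_mult e) simp_all
  have q16: "z 16 = (-7) * K3form (ev 14) z + (-10) * K3form (ev 15) z + (-14) * K3form (ev 16) z + (-20) * K3form (ev 17) z + (-16) * K3form (ev 18) z + (-12) * K3form (ev 19) z + (-8) * K3form (ev 20) z + (-4) * K3form (ev 21) z" by (simp add: K3form_expl ev_def algebra_simps)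
  have d16: "m dvd z 16" unfolding q16 by (intro dvd_add dvd_mult e) simp_all
  have q17: "z 17 = (-10) * K3form (ev 14) z + (-15) * K3form (ev 15) z + (-20) * K3form (ev 16) z + (-30) * K3form (ev 17) z + (-24) * K3form (ev 18) z + (-18) * K3form (ev 19) z + (-12) * K3form (ev 20) z + (-6) * K3form (ev 21) z" by (simp add: K3form_expl ev_def algebra_simps)
  have d17: "m dvd z 17" unfolding q17 by (intro dvd_add dvd_mult e) simp_all
  have q18: "z 18 = (-8) * K3form (ev 14) z + (-12) * K3form (ev 15) z + (-16) * K3form (ev 16) z + (-24) * K3form (ev 17) z + (-20) * K3form (ev 18) z + (-15) * K3form (ev 19) z + (-10) * K3form (ev 20) z + (-5) * K3form (ev 21) z" by (simp add: K3form_expl ev_def algebra_simps)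
  have d18: "m dvd z 18" unfolding q18 by (intro dvd_add dvd_mult e) simp_all
  have q19: "z 19 = (-6) * K3form (ev 14) z + (-9) * K3form (ev 15) z + (-12) * K3form (ev 16) z + (-18) * K3form (ev 17) z + (-15) * K3form (ev 18) z + (-12) * K3form (ev 19) z + (-8) * K3form (ev 20) z + (-4) * K3form (ev 21) z" by (simp add: K3form_expl ev_def algebra_simps)
  have d19: "m dvd z 19" unfolding q19 by (intro dvd_add dvd_mult e) simp_all
  have q20: "z 20 = (-4) * K3form (ev 14) z + (-6) * K3form (ev 15) z + (-8) * K3form (ev 16) z + (-12) * K3form (ev 17) z + (-10) * K3form (ev 18) z + (-8) * K3form (ev 19) z + (-6) * K3form (ev 20) z + (-3) * K3form (ev 21) z" by (simp add: K3form_expl ev_def algebra_simps)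
  have d20: "m dvd z 20" unfolding q20 by (intro dvd_add dvd_mult e) simp_all
  have q21: "z 21 = (-2) * K3form (ev 14) z + (-3) * K3form (ev 15) z + (-4) * K3form (ev 16) z + (-6) * K3form (ev 17) z + (-5) * K3form (ev 18) z + (-4) * K3form (ev 19) z + (-3) * K3form (ev 20) z + (-2) * K3form (ev 21) z" by (simp add: K3form_expl ev_def algebra_simps)
  have d21: "m dvd z 21" unfolding q21 by (intro dvd_add dvd_mult e) simp_all
  show ?thesis
  proof (cases "i < 22")
    case True
    then have "i \<in> {0,1,2,3,4,5,6,7,8,9,10,11,12,13,14,15,16,17,18,19,20,21}"
      unfolding lt22[symmetric] by simp
    then show ?thesis using d0 d1 d2 d3 d4 d5 d6 d7 d8 d9 d10 d11 d12 d13 d14 d15 d16 d17 d18 d19 d20 d21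
      by (elim insertE emptyE) simp_all
  next
    case False
    then show ?thesis using zL by (simp add: K3vecs_def)
  qed
qed



lemma Ucor:
  assumes zL: "z \<in> K3vecs" and d: "\<forall>y\<in>K3vecs. 3 dvd K3form y z"
  shows "\<exists>r\<in>K3vecs. z = 3 * r"
proof -
  have di: "3 dvd z i" for i
    by (rule gram_div[OF zL]) (use d ev_L in blast)
  define r where "r = (\<lambda>i. z i div 3)"
  have "z = 3 * r" by (rule ext) (simp add: r_def di)
  moreover have "r \<in> K3vecs" using zL by (simp add: K3vecs_def r_def)
  ultimately show ?thesis by blast
qed

lemma ND:
  assumes zL: "z \<in> K3vecs" and d: "\<forall>y\<in>K3vecs. K3form y z = 0"
  shows "z = 0"
proof (rule ext)
  fix i
  have "(\<bar>z i\<bar> + 1) dvd z i"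
    by (rule gram_div[OF zL]) (use d ev_L in simp)
  then show "z i = 0 i"
    using dvd_imp_le_int[of "z i" "\<bar>z i\<bar> + 1"] by (cases "z i = 0") auto
qed

lemma cancel3: "(3::zvec) * a = 3 * b \<Longrightarrow> a = b"
proof (rule ext)
  fix i assume "(3::zvec) * a = 3 * b"
  then have "(3 * a) i = (3 * b) i" by simp
  then show "a i = b i" by simp
qed

lemma span2_comm: "span2 x y = span2 y x"
  by (auto simp: span2_def) (metis add.commute)+

lemma keyvec:
  assumes xL: "x \<in> K3vecs" and yL: "y \<in> K3vecs" and xx: "K3form x x = 0" and yy: "K3form y y = 0"
    and xy: "K3form x y = 3"
    and pr: "\<forall>v\<in>K3vecs. 3 * v \<in> span2 x y \<longrightarrow> v \<in> span2 x y"
  shows "\<exists>w\<in>K3vecs. K3form w x = 1 \<and> K3form w y = 0"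
proof -
  have yx: "K3form y x = 3" using xy B_sym by metis
  have Mi: "v \<in> span2 x y \<longleftrightarrow> (\<exists>a b. v = of_int a * x + of_int b * y)" for v
    by (auto simp: span2_def)
  have "\<exists>w\<in>K3vecs. \<not> 3 dvd K3form w x"
  proof (rule ccontr)
    assume "\<not> ?thesis"
    then have "\<forall>w\<in>K3vecs. 3 dvd K3form w x" by auto
    then obtain r where rL: "r \<in> K3vecs" and xr: "x = 3 * r" using Ucor xL by blast
    have "3 * r \<in> span2 x y" unfolding Mi xr[symmetric]
      by (rule exI[of _ 1], rule exI[of _ 0]) simp
    then have "r \<in> span2 x y" using pr rL by blast
    then obtain a b where r: "r = of_int a * x + of_int b * y" using Mi by blast
    have "K3form x y = K3form (3 * r) y" using xr by simp
    also have "\<dots> = 9 * a" by (simp add: r xy yy)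
    finally show False using xy by presburger
  qed
  then obtain w1 where w1L: "w1 \<in> K3vecs" and nd1: "\<not> 3 dvd K3form w1 x" by blast
  define s1 where "s1 = K3form w1 x"
  define t1 where "t1 = K3form w1 y"
  define z where "z = of_int s1 * y - of_int t1 * x"
  have zL: "z \<in> K3vecs" unfolding z_def using xL yL by blast
  have "\<exists>w\<in>K3vecs. \<not> 3 dvd K3form w z"
  proof (rule ccontr)
    assume "\<not> ?thesis"
    then have "\<forall>w\<in>K3vecs. 3 dvd K3form w z" by auto
    then obtain r where rL: "r \<in> K3vecs" and zr: "z = 3 * r" using Ucor zL by blast
    have "3 * r \<in> span2 x y" unfolding Mi zr[symmetric] z_def
      by (rule exI[of _ "- t1"], rule exI[of _ s1]; simp add: algebra_simps)
    then have "r \<in> span2 x y" using pr rL by blast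
    then obtain a b where r: "r = of_int a * x + of_int b * y" using Mi by blast
    have "K3form z x = K3form (3 * r) x" using zr by simp
    then have "3 * s1 = 9 * b" by (simp add: r z_def xx yx s1_def)
    then have "s1 = 3 * b" by simp
    moreover have "\<not> 3 dvd s1" using nd1 by (simp add: s1_def)
    ultimately show False by simp
  qed
  then obtain w2 where w2L: "w2 \<in> K3vecs" and nd2: "\<not> 3 dvd K3form w2 z" by blast
  define s2 where "s2 = K3form w2 x"
  define t2 where "t2 = K3form w2 y"
  define d where "d = s1 * t2 - t1 * s2"
  have dz: "K3form w2 z = d" by (simp add: z_def d_def s2_def t2_def; simp add: algebra_simps)
  define w where "w = of_int t2 * w1 - of_int t1 * w2"
  have wx: "K3form w x = d" by (simp add: w_def d_def s1_def s2_def; simp add: algebra_simps)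
  have wy: "K3form w y = 0" by (simp add: w_def t1_def t2_def; simp add: algebra_simps)
  have "\<not> 3 dvd d" using nd2 dz by simp
  then obtain k where dk: "d * d = 1 + 3 * k"
  proof -
    assume th: "\<And>k. d * d = 1 + 3 * k \<Longrightarrow> thesis"
    have "d mod 3 = 1 \<or> d mod 3 = 2" using \<open>\<not> 3 dvd d\<close> by presburger
    then show thesis
    proof
      assume "d mod 3 = 1"
      then have "d = 3 * (d div 3) + 1" by presburger
      then obtain q where e: "d = 3 * q + 1" by blast
      show thesis by (rule th[of "3 * q * q + 2 * q"]) (simp add: e algebra_simps)
    next
      assume "d mod 3 = 2"
      then have "d = 3 * (d div 3) + 2" by presburger
      then obtain q where e: "d = 3 * q + 2" by blast
      show thesis by (rule th[of "3 * q * q + 4 * q + 1"]) (simp add: e algebra_simps)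
    qed
  qed
  define w' where "w' = of_int d * w - of_int k * y"
  have "w' \<in> K3vecs" unfolding w'_def w_def using w1L w2L yL by blast
  moreover have "K3form w' x = 1" by (simp add: w'_def wx yx dk)
  moreover have "K3form w' y = 0" by (simp add: w'_def wy yy)
  ultimately show ?thesis by blast
qed



lemma iso_bij: "is_isometry A f \<Longrightarrow> bij_betw f A A" by (simp add: is_isometry_def)
lemma iso_in: "is_isometry A f \<Longrightarrow> v \<in> A \<Longrightarrow> f v \<in> A"
  using iso_bij bij_betw_apply by metis
lemma iso_add: "is_isometry A f \<Longrightarrow> v \<in> A \<Longrightarrow> w \<in> A \<Longrightarrow> f (v + w) = f v + f w"
  unfolding is_isometry_def by simp
lemma iso_B: "is_isometry A f \<Longrightarrow> v \<in> A \<Longrightarrow> w \<in> A \<Longrightarrow> K3form (f v) (f w) = K3form v w"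
  unfolding is_isometry_def by simp
lemma iso_surj: "is_isometry A f \<Longrightarrow> v \<in> A \<Longrightarrow> \<exists>u\<in>A. f u = v"
proof -
  assume "is_isometry A f" "v \<in> A"
  then have "v \<in> f ` A" using iso_bij[of A f] by (simp add: bij_betw_def)
  then show ?thesis by (auto simp: image_iff)
qed

locale grp_set =
  fixes A :: "zvec set"
  assumes A0: "0 \<in> A" and Aadd: "\<And>v w. v \<in> A \<Longrightarrow> w \<in> A \<Longrightarrow> v + w \<in> A"
    and Aneg: "\<And>v. v \<in> A \<Longrightarrow> - v \<in> A"
begin
lemma Suc_mult: "of_nat (Suc n) * (v::zvec) = v + of_nat n * v"
  by (simp only: of_nat_Suc distrib_right mult.left_neutral)

lemma Aint: "v \<in> A \<Longrightarrow> of_int k * v \<in> A"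
proof -
  assume v: "v \<in> A"
  have n: "of_nat n * v \<in> A" for n
  proof (induction n)
    case 0 show ?case using A0 by (simp only: of_nat_0 mult_zero_left)
  next
    case (Suc n)
    show ?case unfolding Suc_mult by (rule Aadd[OF v Suc])
  qed
  show ?thesis
  proof (cases k rule: int_cases)
    case (nonneg n)
    then have "of_int k * v = of_nat n * v" by (simp only: of_int_of_nat_eq)
    then show ?thesis using n[of n] by (simp only:)
  next
    case (neg n)
    then have "of_int k * v = - (of_nat (Suc n) * v)" by (simp only: of_int_minus of_int_of_nat_eq mult_minus_left)
    then show ?thesis using Aneg[OF n[of "Suc n"]] by (simp only:)
  qed
qed

lemma iso_zero: "is_isometry A f \<Longrightarrow> f 0 = 0"
proof -
  assume f: "is_isometry A f"
  have "f (0 + 0) = f 0 + f 0" using iso_add[OF f A0 A0] .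
  then have "f 0 = f 0 + f 0" by (simp only: add_0)
  then show ?thesis by (rule iffD1[OF add_cancel_right_right])
qed

lemma iso_neg: "is_isometry A f \<Longrightarrow> v \<in> A \<Longrightarrow> f (- v) = - f v"
proof -
  assume f: "is_isometry A f" and v: "v \<in> A"
  have "f (v + - v) = f v + f (- v)" using iso_add[OF f v Aneg[OF v]] .
  then have "f v + f (- v) = 0" using iso_zero[OF f] by (simp only: add.right_inverse)
  then show ?thesis by (simp only: add.commute[of "f v"] eq_neg_iff_add_eq_0)
qed

lemma iso_int: "is_isometry A f \<Longrightarrow> v \<in> A \<Longrightarrow> f (of_int k * v) = of_int k * f v"
proof -
  assume f: "is_isometry A f" and v: "v \<in> A"
  have m: "of_nat n * v \<in> A" for n using Aint[OF v, of "int n"] by (simp only: of_int_of_nat_eq)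
  have n: "f (of_nat n * v) = of_nat n * f v" for n
  proof (induction n)
    case 0 show ?case using iso_zero[OF f] by (simp only: of_nat_0 mult_zero_left)
  next
    case (Suc n)
    show ?case unfolding Suc_mult iso_add[OF f v m] Suc.IH ..
  qed
  show ?thesis
  proof (cases k rule: int_cases)
    case (nonneg n)
    then show ?thesis using n[of n] by (simp only: of_int_of_nat_eq)
  next
    case (neg n)
    then have "of_int k * v = - (of_nat (Suc n) * v)" by (simp only: of_int_minus of_int_of_nat_eq mult_minus_left)
    moreover have "of_int k * f v = - (of_nat (Suc n) * f v)" using neg by (simp only: of_int_minus of_int_of_nat_eq mult_minus_left)
    ultimately show ?thesis using iso_neg[OF f m[of "Suc n"]] n[of "Suc n"] by (simp only:)
  qed
qed
end

interpretation L: grp_set K3vecs by unfold_locales auto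


locale K3setup =
  fixes x1 x2 :: zvec and ze :: "zvec \<Rightarrow> zvec"
  assumes x1L: "x1 \<in> K3vecs" and x2L: "x2 \<in> K3vecs"
    and x11: "K3form x1 x1 = 0" and x22: "K3form x2 x2 = 0" and x12: "K3form x1 x2 = 3"
    and prim: "primitive_in_K3 (span2 x1 x2)"
    and iso: "is_isometry (orth2 x1 x2) ze"
begin

lemma x21: "K3form x2 x1 = 3" using x12 B_sym by metis
lemmas Bx = x11 x22 x12 x21

abbreviation "N \<equiv> orth2 x1 x2"
abbreviation "M \<equiv> span2 x1 x2"

lemma N_iff: "v \<in> N \<longleftrightarrow> v \<in> K3vecs \<and> K3form v x1 = 0 \<and> K3form v x2 = 0"
  by (simp add: orth2_def)
lemma M_iff: "v \<in> M \<longleftrightarrow> (\<exists>a b. v = of_int a * x1 + of_int b * x2)"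
  by (auto simp: span2_def)
lemma prim3: "v \<in> K3vecs \<Longrightarrow> 3 * v \<in> M \<Longrightarrow> v \<in> M"
  using prim unfolding primitive_in_K3_def by (metis vsmul_eq of_int_numeral zero_neq_numeral)

sublocale N: grp_set N by unfold_locales (auto simp: N_iff)

lemma NL: "v \<in> N \<Longrightarrow> v \<in> K3vecs" by (simp add: N_iff)
lemma NB1: "v \<in> N \<Longrightarrow> K3form v x1 = 0" by (simp add: N_iff)
lemma NB2: "v \<in> N \<Longrightarrow> K3form v x2 = 0" by (simp add: N_iff)
lemma NB1': "v \<in> N \<Longrightarrow> K3form x1 v = 0" using NB1 B_sym by metis
lemma NB2': "v \<in> N \<Longrightarrow> K3form x2 v = 0" using NB2 B_sym by metis
lemma N_num: "v \<in> N \<Longrightarrow> numeral k * v \<in> N" using N.Aint[of v "numeral k"] by simp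
lemma N_diff: "v \<in> N \<Longrightarrow> w \<in> N \<Longrightarrow> v - w \<in> N" using N.Aadd N.Aneg by (metis diff_conv_add_uminus)

lemma zin: "v \<in> N \<Longrightarrow> ze v \<in> N" using iso_in[OF iso] .
lemma zadd: "v \<in> N \<Longrightarrow> w \<in> N \<Longrightarrow> ze (v + w) = ze v + ze w" using iso_add[OF iso] .
lemma zB: "v \<in> N \<Longrightarrow> w \<in> N \<Longrightarrow> K3form (ze v) (ze w) = K3form v w" using iso_B[OF iso] .
lemma zsurj: "v \<in> N \<Longrightarrow> \<exists>u\<in>N. ze u = v" using iso_surj[OF iso] .
lemma z0: "ze 0 = 0" using N.iso_zero[OF iso] .
lemma zint: "v \<in> N \<Longrightarrow> ze (of_int k * v) = of_int k * ze v" using N.iso_int[OF iso] .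
lemma znum: "v \<in> N \<Longrightarrow> ze (numeral k * v) = numeral k * ze v" using zint[of v "numeral k"] by simp
lemma zneg: "v \<in> N \<Longrightarrow> ze (- v) = - ze v" using N.iso_neg[OF iso] .
lemma zdiff: "v \<in> N \<Longrightarrow> w \<in> N \<Longrightarrow> ze (v - w) = ze v - ze w"
  using zadd[of v "- w"] zneg[of w] N.Aneg by simp

definition w1 where "w1 = (SOME w. w \<in> K3vecs \<and> K3form w x1 = 1 \<and> K3form w x2 = 0)"
definition w2 where "w2 = (SOME w. w \<in> K3vecs \<and> K3form w x2 = 1 \<and> K3form w x1 = 0)"

lemma w1_ex: "\<exists>w. w \<in> K3vecs \<and> K3form w x1 = 1 \<and> K3form w x2 = 0"
  using keyvec[OF x1L x2L x11 x22 x12] prim3 by blast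
lemma w2_ex: "\<exists>w. w \<in> K3vecs \<and> K3form w x2 = 1 \<and> K3form w x1 = 0"
  using keyvec[OF x2L x1L x22 x11 x21] prim3 span2_comm[of x1 x2] by auto

lemma w1: "w1 \<in> K3vecs" "K3form w1 x1 = 1" "K3form w1 x2 = 0"
  using someI_ex[OF w1_ex] unfolding w1_def[symmetric] by auto
lemma w2: "w2 \<in> K3vecs" "K3form w2 x2 = 1" "K3form w2 x1 = 0"
  using someI_ex[OF w2_ex] unfolding w2_def[symmetric] by auto
lemma w1': "K3form x1 w1 = 1" "K3form x2 w1 = 0" using w1 B_sym by metis+
lemma w2': "K3form x2 w2 = 1" "K3form x1 w2 = 0" using w2 B_sym by metis+

definition P :: "zvec \<Rightarrow> zvec" where
  "P v = of_int (K3form v x2) * x1 + of_int (K3form v x1) * x2"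
definition nv :: "zvec \<Rightarrow> zvec" where "nv v = 3 * v - P v"

lemma P_add[simp]: "P (v + w) = P v + P w" by (simp add: P_def algebra_simps)
lemma P_diff[simp]: "P (v - w) = P v - P w" by (simp add: P_def algebra_simps)
lemma P_neg[simp]: "P (- v) = - P v" by (simp add: P_def algebra_simps)
lemma P_int[simp]: "P (of_int k * v) = of_int k * P v" by (simp add: P_def distrib_left mult.assoc)
lemma P_num[simp]: "P (numeral k * v) = numeral k * P v"
  using P_int[of "numeral k" v] by simp
lemma P_N: "v \<in> N \<Longrightarrow> P v = 0" by (simp add: P_def N_iff)
lemma P_L: "P v \<in> K3vecs" unfolding P_def using x1L x2L by blast
lemma PB: "n \<in> N \<Longrightarrow> K3form (P v) n = 0" by (simp add: P_def NB1' NB2')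
lemma PB': "n \<in> N \<Longrightarrow> K3form n (P v) = 0" by (simp add: P_def NB1 NB2)
lemma PBx: "K3form (P v) x1 = 3 * K3form v x1" "K3form (P v) x2 = 3 * K3form v x2"
  by (simp_all add: P_def Bx)

lemma nv_N: "v \<in> K3vecs \<Longrightarrow> nv v \<in> N"
  unfolding N_iff nv_def using P_L by (auto simp: PBx)
lemma nv_add: "nv (v + w) = nv v + nv w" by (simp add: nv_def algebra_simps)
lemma three_split: "3 * v = P v + nv v" by (simp add: nv_def)

lemma decomp: "v \<in> K3vecs \<Longrightarrow> v - of_int (K3form v x2) * w2 - of_int (K3form v x1) * w1 \<in> N"
proof -
  assume vL: "v \<in> K3vecs"
  have "v - of_int (K3form v x2) * w2 - of_int (K3form v x1) * w1 \<in> K3vecs"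
    using vL w1(1) w2(1) by (intro L_diff L_mult)
  then show ?thesis unfolding N_iff by (simp add: w1 w2)
qed

lemma perp:
  assumes wL: "w \<in> K3vecs" and o: "\<forall>n\<in>N. K3form w n = 0"
  shows "w \<in> M"
proof -
  have nwN: "nv w \<in> N" using nv_N[OF wL] .
  have "\<forall>u\<in>K3vecs. K3form u (nv w) = 0"
  proof
    fix u assume uL: "u \<in> K3vecs"
    have "3 * K3form u (nv w) = K3form (P u + nv u) (nv w)" using three_split[of u] by (metis B_num1)
    also have "\<dots> = K3form (nv u) (nv w)" using PB[OF nwN] by simp
    also have "\<dots> = K3form (nv u) (3 * w) - K3form (nv u) (P w)" by (simp add: nv_def)
    also have "\<dots> = 0"
    proof -
      have a: "K3form (nv u) w = 0" using o nv_N[OF uL] B_sym by metis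
      have b: "K3form (nv u) (P w) = 0" using PB'[OF nv_N[OF uL]] .
      show ?thesis using a b by simp
    qed
    finally show "K3form u (nv w) = 0" by simp
  qed
  then have "nv w = 0" using ND nwN NL by blast
  then have "3 * w = P w" by (simp add: nv_def)
  moreover have "P w \<in> M" unfolding M_iff P_def by blast
  ultimately show ?thesis using prim3 wL by simp
qed

lemma gx2:
  assumes g: "is_isometry K3vecs g" and geta: "g (x1 + x2) = x1 + x2"
    and gs: "\<forall>n\<in>N. \<exists>m\<in>N. g m = n"
  shows "g x2 = x1 \<or> g x2 = x2"
proof -
  have "\<forall>n\<in>N. K3form (g x2) n = 0"
  proof
    fix n assume "n \<in> N"
    then obtain m where mN: "m \<in> N" and gm: "g m = n" using gs by blast
    have "K3form (g x2) (g m) = K3form x2 m" using iso_B[OF g x2L NL[OF mN]] .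
    then show "K3form (g x2) n = 0" using gm NB2'[OF mN] by simp
  qed
  then have "g x2 \<in> M" using perp iso_in[OF g x2L] by blast
  then obtain a b where ab: "g x2 = of_int a * x1 + of_int b * x2" using M_iff by blast
  have "K3form (g x2) (g x2) = K3form x2 x2" using iso_B[OF g x2L x2L] .
  then have "6 * a * b = 0" by (simp add: ab Bx; simp add: algebra_simps)
  moreover have "K3form (g x2) (g (x1 + x2)) = K3form x2 (x1 + x2)" using iso_B[OF g x2L] x1L x2L by blast
  then have "3 * a + 3 * b = 3" using geta by (simp add: ab Bx; simp add: algebra_simps)
  ultimately have "(a = 1 \<and> b = 0) \<or> (a = 0 \<and> b = 1)" by auto
  then show ?thesis using ab by auto
qed

lemma M11: "x1 + x1 \<in> M"
proof -
  have "x1 + x1 = of_int 2 * x1 + of_int 0 * x2" by (metis add.right_neutral mult_2 mult_zero_left of_int_0 of_int_numeral)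
  then show ?thesis unfolding M_iff by blast
qed
lemma M22: "x2 + x2 \<in> M"
proof -
  have "x2 + x2 = of_int 0 * x1 + of_int 2 * x2" by (metis add.left_neutral mult_2 mult_zero_left of_int_0 of_int_numeral)
  then show ?thesis unfolding M_iff by blast
qed

lemma uniq:
  assumes e1: "extends_fixing N (vadd x1 x2) ze"
    and e2: "extends_fixing N (vadd x1 x2) (\<lambda>v. vneg (ze v))"
  shows False
proof -
  obtain g where g: "is_isometry K3vecs g" and geta: "g (x1 + x2) = x1 + x2" and gN: "\<forall>v\<in>N. g v = ze v"
    using e1 unfolding extends_fixing_def by auto
  obtain h where h: "is_isometry K3vecs h" and heta: "h (x1 + x2) = x1 + x2" and hN: "\<forall>v\<in>N. h v = - ze v"
    using e2 unfolding extends_fixing_def by auto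
  have gs: "\<forall>n\<in>N. \<exists>m\<in>N. g m = n"
  proof
    fix n assume "n \<in> N"
    then obtain m where "m \<in> N" "ze m = n" using zsurj by blast
    then show "\<exists>m\<in>N. g m = n" using gN by auto
  qed
  have hs: "\<forall>n\<in>N. \<exists>m\<in>N. h m = n"
  proof
    fix n assume "n \<in> N"
    then obtain m where "m \<in> N" "ze m = - n" using zsurj N.Aneg by blast
    then show "\<exists>m\<in>N. h m = n" using hN by (metis minus_minus)
  qed
  define n1 where "n1 = 3 * w1 - x2"
  have n1N: "n1 \<in> N" unfolding N_iff n1_def using w1 x2L by (auto simp: Bx)
  have e: "3 * w1 = x2 + n1" by (simp add: n1_def)
  have "g (3 * w1) = 3 * g w1" using L.iso_int[OF g w1(1), of 3] by simp
  moreover have "g (x2 + n1) = g x2 + ze n1" using iso_add[OF g x2L NL[OF n1N]] gN n1N by simp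
  moreover have "h (3 * w1) = 3 * h w1" using L.iso_int[OF h w1(1), of 3] by simp
  moreover have "h (x2 + n1) = h x2 - ze n1" using iso_add[OF h x2L NL[OF n1N]] hN n1N by simp
  ultimately have key: "3 * (g w1 + h w1) = g x2 + h x2" using e by (simp add: algebra_simps)
  define y where "y = g w1 + h w1"
  have yL: "y \<in> K3vecs" unfolding y_def using iso_in[OF g w1(1)] iso_in[OF h w1(1)] by blast
  have c: "g x2 + h x2 \<in> {x1 + x1, x1 + x2, x2 + x1, x2 + x2}"
    using gx2[OF g geta gs] gx2[OF h heta hs] by auto
  have "g x2 + h x2 \<in> M"
    using c
  proof (elim insertE emptyE)
    assume "g x2 + h x2 = x1 + x1"
    then show ?thesis using M11 by simp
  next
    assume "g x2 + h x2 = x1 + x2"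
    then show ?thesis unfolding M_iff by (intro exI[of _ 1] exI[of _ 1]) simp
  next
    assume "g x2 + h x2 = x2 + x1"
    then show ?thesis unfolding M_iff by (intro exI[of _ 1] exI[of _ 1]) (simp add: add.commute)
  next
    assume "g x2 + h x2 = x2 + x2"
    then show ?thesis using M22 by simp
  qed
  then have "3 * y \<in> M" using key unfolding y_def by simp
  then have "y \<in> M" using prim3 yL by blast
  then obtain a b where ab: "y = of_int a * x1 + of_int b * x2" using M_iff by blast
  have k1: "K3form (3 * y) x1 = K3form (g x2 + h x2) x1" using key y_def by simp
  have k2: "K3form (3 * y) x2 = K3form (g x2 + h x2) x2" using key y_def by simp
  from c show False
  proof (elim insertE emptyE)
    assume "g x2 + h x2 = x1 + x1"
    then have "9 * a = 6" using k2 by (simp add: ab Bx)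
    then show False by presburger
  next
    assume "g x2 + h x2 = x1 + x2"
    then have "9 * a = 3" using k2 by (simp add: ab Bx)
    then show False by presburger
  next
    assume "g x2 + h x2 = x2 + x1"
    then have "9 * a = 3" using k2 by (simp add: ab Bx)
    then show False by presburger
  next
    assume "g x2 + h x2 = x2 + x2"
    then have "9 * b = 6" using k1 by (simp add: ab Bx)
    then show False by presburger
  qed
qed

end



lemma dvd_sub1: "(3::int) dvd z - 1 \<Longrightarrow> z mod 3 = 1" by presburger

lemma res3:
  fixes x y :: int assumes "3 dvd x * y - 1"
  shows "(x mod 3 = 1 \<and> y mod 3 = 1) \<or> (x mod 3 = 2 \<and> y mod 3 = 2)"
proof -
  have "(x * y) mod 3 = 1" using dvd_sub1[OF assms] .
  then have h: "((x mod 3) * (y mod 3)) mod 3 = 1" by (simp add: mod_mult_eq)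
  have "x mod 3 = 0 \<or> x mod 3 = 1 \<or> x mod 3 = 2" by presburger
  moreover have "y mod 3 = 0 \<or> y mod 3 = 1 \<or> y mod 3 = 2" by presburger
  ultimately show ?thesis using h by auto
qed

lemma prime3:
  fixes x y :: int assumes "3 dvd x * y" shows "3 dvd x \<or> 3 dvd y"
proof (rule ccontr)
  assume n: "\<not> (3 dvd x \<or> 3 dvd y)"
  have "(x * y) mod 3 = 0" using assms by presburger
  then have h: "((x mod 3) * (y mod 3)) mod 3 = 0" by (simp add: mod_mult_eq)
  have "x mod 3 = 1 \<or> x mod 3 = 2" using n by presburger
  moreover have "y mod 3 = 1 \<or> y mod 3 = 2" using n by presburger
  ultimately show False using h by auto
qed

lemma classify:
  fixes a b c d :: int
  assumes ab: "3 dvd a * b" and cd: "3 dvd c * d" and x: "3 dvd a * d + b * c - 1"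
  shows "\<exists>e. (e = 1 \<or> e = -1) \<and>
    ((3 dvd a \<and> 3 dvd d \<and> 3 dvd 1 + e * b \<and> 3 dvd 1 + e * c) \<or>
     (3 dvd b \<and> 3 dvd c \<and> 3 dvd 1 + e * a \<and> 3 dvd 1 + e * d))"
proof (cases "3 dvd a")
  case True
  then have "3 dvd a * d" by simp
  then have bc: "3 dvd b * c - 1" using x by (metis (no_types) add_diff_eq dvd_add_right_iff)
  then have r: "(b mod 3 = 1 \<and> c mod 3 = 1) \<or> (b mod 3 = 2 \<and> c mod 3 = 2)" by (rule res3)
  then have "\<not> 3 dvd c" by presburger
  then have "3 dvd d" using prime3[OF cd] by simp
  from r show ?thesis
  proof
    assume "b mod 3 = 1 \<and> c mod 3 = 1"
    then have "3 dvd 1 + (-1) * b" "3 dvd 1 + (-1) * c" by presburger+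
    then show ?thesis using True \<open>3 dvd d\<close> by blast
  next
    assume "b mod 3 = 2 \<and> c mod 3 = 2"
    then have "3 dvd 1 + 1 * b" "3 dvd 1 + 1 * c" by presburger+
    then show ?thesis using True \<open>3 dvd d\<close> by blast
  qed
next
  case False
  then have "3 dvd b" using prime3[OF ab] by simp
  then have "3 dvd b * c" by simp
  then have ad: "3 dvd a * d - 1" using x by (metis (no_types) add_diff_eq dvd_add_left_iff add.commute diff_add_eq)
  then have r: "(a mod 3 = 1 \<and> d mod 3 = 1) \<or> (a mod 3 = 2 \<and> d mod 3 = 2)" by (rule res3)
  then have "\<not> 3 dvd d" by presburger
  then have "3 dvd c" using prime3[OF cd] by simp
  from r show ?thesis
  proof
    assume "a mod 3 = 1 \<and> d mod 3 = 1"
    then have "3 dvd 1 + (-1) * a" "3 dvd 1 + (-1) * d" by presburger+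
    then show ?thesis using \<open>3 dvd b\<close> \<open>3 dvd c\<close> by blast
  next
    assume "a mod 3 = 2 \<and> d mod 3 = 2"
    then have "3 dvd 1 + 1 * a" "3 dvd 1 + 1 * d" by presburger+
    then show ?thesis using \<open>3 dvd b\<close> \<open>3 dvd c\<close> by blast
  qed
qed


context K3setup begin

definition n1 where "n1 = nv w1"
definition n2 where "n2 = nv w2"
lemma Pw1: "P w1 = x2" by (simp add: P_def w1)
lemma Pw2: "P w2 = x1" by (simp add: P_def w2)
lemma n1N: "n1 \<in> N" unfolding n1_def using nv_N w1(1) .
lemma n2N: "n2 \<in> N" unfolding n2_def using nv_N w2(1) .
lemma n1_eq: "n1 = 3 * w1 - x2" by (simp add: n1_def nv_def Pw1)
lemma n2_eq: "n2 = 3 * w2 - x1" by (simp add: n2_def nv_def Pw2)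

lemma zdiv:
  assumes vL: "v \<in> K3vecs" and sN: "s \<in> N"
  shows "3 dvd K3form (ze (nv v)) s"
proof -
  obtain s' where s'N: "s' \<in> N" and s: "ze s' = s" using zsurj[OF sN] by blast
  have "K3form (ze (nv v)) s = K3form (nv v) s'" using zB[OF nv_N[OF vL] s'N] s by simp
  also have "\<dots> = 3 * K3form v s'" using PB[OF s'N] by (simp add: nv_def)
  finally show ?thesis by simp
qed

lemma ysplit:
  assumes yL: "y \<in> K3vecs"
  shows "K3form y z = K3form (y - of_int (K3form y x2) * w2 - of_int (K3form y x1) * w1) z
     + K3form y x2 * K3form w2 z + K3form y x1 * K3form w1 z"
  by simp

lemma modx:
  assumes mN: "m \<in> N" and d: "\<forall>s\<in>N. 3 dvd K3form m s"
  shows "\<exists>r\<in>K3vecs. m - of_int (K3form m w1) * x1 - of_int (K3form m w2) * x2 = 3 * r"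
proof -
  define z where "z = m - of_int (K3form m w1) * x1 - of_int (K3form m w2) * x2"
  have zL: "z \<in> K3vecs" unfolding z_def using NL[OF mN] x1L x2L by (intro L_diff L_mult)
  have "\<forall>y\<in>K3vecs. 3 dvd K3form y z"
  proof
    fix y assume yL: "y \<in> K3vecs"
    define t where "t = y - of_int (K3form y x2) * w2 - of_int (K3form y x1) * w1"
    have tN: "t \<in> N" using decomp[OF yL] unfolding t_def .
    have z1: "K3form w1 z = 0" using B_sym[of w1 m] by (simp add: z_def w1 w1')
    have z2: "K3form w2 z = 0" using B_sym[of w2 m] by (simp add: z_def w2 w2')
    have zt: "K3form t z = K3form t m" by (simp add: z_def NB1[OF tN] NB2[OF tN])
    have "3 dvd K3form t m" using d tN B_sym[of t m] by simp
    have "K3form y z = K3form t z + K3form y x2 * K3form w2 z + K3form y x1 * K3form w1 z" by (simp add: t_def)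
    then show "3 dvd K3form y z" using z1 z2 zt \<open>3 dvd K3form t m\<close> by simp
  qed
  then show ?thesis using Ucor[OF zL] unfolding z_def by blast
qed

definition q11 where "q11 = K3form (ze n1) w1"
definition q12 where "q12 = K3form (ze n1) w2"
definition q21 where "q21 = K3form (ze n2) w1"
definition q22 where "q22 = K3form (ze n2) w2"

lemma zn_split:
  assumes "n \<in> N" and "n = nv w" and "w \<in> K3vecs"
  obtains r where "r \<in> K3vecs" "ze n = of_int (K3form (ze n) w1) * x1 + of_int (K3form (ze n) w2) * x2 + 3 * r"
    "K3form x1 r = - K3form (ze n) w2" "K3form x2 r = - K3form (ze n) w1"
    "K3form r x1 = - K3form (ze n) w2" "K3form r x2 = - K3form (ze n) w1"
proof -
  have zn: "ze n \<in> N" using zin[OF assms(1)] .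
  have "\<forall>s\<in>N. 3 dvd K3form (ze n) s" using zdiv[OF assms(3)] assms(2) by simp
  then obtain r where rL: "r \<in> K3vecs"
    and r: "ze n - of_int (K3form (ze n) w1) * x1 - of_int (K3form (ze n) w2) * x2 = 3 * r"
    using modx[OF zn] by blast
  have e: "ze n = of_int (K3form (ze n) w1) * x1 + of_int (K3form (ze n) w2) * x2 + 3 * r"
    using r by (simp add: algebra_simps)
  have "3 * K3form x1 r = K3form x1 (3 * r)" by simp
  also have "\<dots> = - 3 * K3form (ze n) w2" unfolding r[symmetric] using NB1'[OF zn] by (simp add: Bx)
  finally have r1: "K3form x1 r = - K3form (ze n) w2" by simp
  have "3 * K3form x2 r = K3form x2 (3 * r)" by simp
  also have "\<dots> = - 3 * K3form (ze n) w1" unfolding r[symmetric] using NB2'[OF zn] by (simp add: Bx)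
  finally have r2: "K3form x2 r = - K3form (ze n) w1" by simp
  show ?thesis using that rL e r1 r2 B_sym[of r x1] B_sym[of r x2] by simp
qed

lemma lin6: "6 * p = 9 * (X::int) \<Longrightarrow> 3 dvd p" by presburger
lemma lin3: "- 3 * p + 9 * (R::int) = 9 * W - 3 \<Longrightarrow> 3 dvd p - 1" by presburger

lemma q_constraints:
  "3 dvd q11 * q12" "3 dvd q21 * q22" "3 dvd q11 * q22 + q12 * q21 - 1"
proof -
  obtain r1 where r1: "r1 \<in> K3vecs" "ze n1 = of_int q11 * x1 + of_int q12 * x2 + 3 * r1"
    "K3form x1 r1 = - q12" "K3form x2 r1 = - q11" "K3form r1 x1 = - q12" "K3form r1 x2 = - q11"
    using zn_split[OF n1N n1_def w1(1)] unfolding q11_def q12_def by blast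
  obtain r2 where r2: "r2 \<in> K3vecs" "ze n2 = of_int q21 * x1 + of_int q22 * x2 + 3 * r2"
    "K3form x1 r2 = - q22" "K3form x2 r2 = - q21" "K3form r2 x1 = - q22" "K3form r2 x2 = - q21"
    using zn_split[OF n2N n2_def w2(1)] unfolding q21_def q22_def by blast
  have w1x2: "K3form x2 w1 = 0" using w1' by simp
  have "K3form (ze n1) (ze n1) = K3form n1 n1" using zB[OF n1N n1N] .
  then have "K3form (of_int q11 * x1 + of_int q12 * x2 + 3 * r1) (of_int q11 * x1 + of_int q12 * x2 + 3 * r1)
       = K3form (3 * w1 - x2) (3 * w1 - x2)" using r1(2) n1_eq by simp
  then have "- 6 * (q11 * q12) + 9 * K3form r1 r1 = 9 * K3form w1 w1"
    by (simp add: r1(3-6) Bx w1 w1'; simp add: algebra_simps)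
  then have "6 * (q11 * q12) = 9 * (K3form r1 r1 - K3form w1 w1)" by (simp add: algebra_simps)
  then show "3 dvd q11 * q12" by (rule lin6)
  have "K3form (ze n2) (ze n2) = K3form n2 n2" using zB[OF n2N n2N] .
  then have "K3form (of_int q21 * x1 + of_int q22 * x2 + 3 * r2) (of_int q21 * x1 + of_int q22 * x2 + 3 * r2)
       = K3form (3 * w2 - x1) (3 * w2 - x1)" using r2(2) n2_eq by simp
  then have "- 6 * (q21 * q22) + 9 * K3form r2 r2 = 9 * K3form w2 w2"
    by (simp add: r2(3-6) Bx w2 w2'; simp add: algebra_simps)
  then have "6 * (q21 * q22) = 9 * (K3form r2 r2 - K3form w2 w2)" by (simp add: algebra_simps)
  then show "3 dvd q21 * q22" by (rule lin6)
  have "K3form (ze n1) (ze n2) = K3form n1 n2" using zB[OF n1N n2N] .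
  then have "K3form (of_int q11 * x1 + of_int q12 * x2 + 3 * r1) (of_int q21 * x1 + of_int q22 * x2 + 3 * r2)
       = K3form (3 * w1 - x2) (3 * w2 - x1)" using r1(2) r2(2) n1_eq n2_eq by simp
  then have "- 3 * (q11 * q22 + q12 * q21) + 9 * K3form r1 r2 = 9 * K3form w1 w2 - 3"
    by (simp add: r1(3-6) r2(3-6) Bx w1 w1' w2 w2'; simp add: algebra_simps)
  then show "3 dvd q11 * q22 + q12 * q21 - 1" by (rule lin3)
qed


definition Q :: "bool \<Rightarrow> zvec \<Rightarrow> zvec" where
  "Q sw v = (if sw then of_int (K3form v x1) * x1 + of_int (K3form v x2) * x2 else P v)"
definition numer :: "bool \<Rightarrow> int \<Rightarrow> zvec \<Rightarrow> zvec" where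
  "numer sw e v = Q sw v + of_int e * ze (nv v)"
definition gmap :: "bool \<Rightarrow> int \<Rightarrow> zvec \<Rightarrow> zvec" where
  "gmap sw e v = (\<lambda>i. numer sw e v i div 3)"

lemma Q_add: "Q sw (v + w) = Q sw v + Q sw w"
  by (cases sw) (simp_all add: Q_def algebra_simps)
lemma Q_int: "Q sw (of_int k * v) = of_int k * Q sw v"
  by (cases sw) (simp_all add: Q_def distrib_left mult.assoc)
lemma Q_N: "v \<in> N \<Longrightarrow> Q sw v = 0"
  by (simp add: Q_def P_N NB1 NB2)
lemma Q_L: "Q sw v \<in> K3vecs"
  unfolding Q_def using P_L x1L x2L by auto
lemma QB: "n \<in> N \<Longrightarrow> K3form (Q sw v) n = 0"
  by (simp add: Q_def PB NB1' NB2')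
lemma QB': "n \<in> N \<Longrightarrow> K3form n (Q sw v) = 0"
  by (simp add: Q_def PB' NB1 NB2)
lemma QQ: "K3form (Q sw v) (Q sw w) = K3form (P v) (P w)"
  by (cases sw; simp add: Q_def P_def Bx; simp add: algebra_simps)
lemma PQ: "K3form (P u) (Q sw y) = K3form (Q sw u) (P y)"
  by (cases sw; simp add: Q_def P_def Bx; simp add: algebra_simps)
lemma PQ3: "P (Q sw y) = 3 * Q sw y"
  by (cases sw) (simp_all add: Q_def P_def Bx distrib_left mult.assoc add.commute)
lemma QQ3: "Q sw (Q sw y) = 3 * P y"
  by (cases sw) (simp_all add: Q_def P_def Bx distrib_left mult.assoc add.commute)
lemma Qw1: "K3form w1 (Q sw v) = (if sw then K3form v x1 else K3form v x2)"
  by (simp add: Q_def P_def w1)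
lemma Qw2: "K3form w2 (Q sw v) = (if sw then K3form v x2 else K3form v x1)"
  by (simp add: Q_def P_def w2)

lemma nv_int: "nv (of_int k * v) = of_int k * nv v"
  by (simp add: nv_def right_diff_distrib mult.left_commute)

lemma numer_L: "v \<in> K3vecs \<Longrightarrow> numer sw e v \<in> K3vecs"
  unfolding numer_def using Q_L NL[OF zin[OF nv_N]] by blast
lemma numer_add: "v \<in> K3vecs \<Longrightarrow> w \<in> K3vecs \<Longrightarrow> numer sw e (v + w) = numer sw e v + numer sw e w"
  by (simp add: numer_def Q_add nv_add zadd[OF nv_N nv_N] algebra_simps)
lemma numer_int: "v \<in> K3vecs \<Longrightarrow> numer sw e (of_int k * v) = of_int k * numer sw e v"
  by (simp add: numer_def Q_int nv_int zint[OF nv_N]; simp add: algebra_simps)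

lemma good:
  assumes c1: "\<And>a b. 3 dvd (if sw then b else a) + e * (a * q21 + b * q11)"
    and c2: "\<And>a b. 3 dvd (if sw then a else b) + e * (a * q22 + b * q12)"
    and vL: "v \<in> K3vecs"
  shows "\<exists>r\<in>K3vecs. numer sw e v = 3 * r"
proof -
  define a where "a = K3form v x2"
  define b where "b = K3form v x1"
  define t where "t = v - of_int a * w2 - of_int b * w1"
  have tN: "t \<in> N" using decomp[OF vL] unfolding t_def a_def b_def .
  have nve: "nv v = of_int a * n2 + of_int b * n1 + 3 * t"
    by (simp add: nv_def P_def n1_eq n2_eq t_def a_def b_def algebra_simps)
  have zve: "ze (nv v) = of_int a * ze n2 + of_int b * ze n1 + 3 * ze t"
  proof -
    have "ze (nv v) = ze (of_int a * n2 + of_int b * n1) + ze (3 * t)"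
      unfolding nve using N.Aadd N.Aint n1N n2N N_num tN by (intro zadd) auto
    also have "\<dots> = ze (of_int a * n2) + ze (of_int b * n1) + 3 * ze t"
      using N.Aint n1N n2N zadd znum[OF tN] by simp
    also have "\<dots> = of_int a * ze n2 + of_int b * ze n1 + 3 * ze t"
      using zint n1N n2N by simp
    finally show ?thesis .
  qed
  have d1: "3 dvd K3form w1 (numer sw e v)"
  proof -
    have "K3form w1 (numer sw e v) = (if sw then b else a) + e * (a * q21 + b * q11) + 3 * (e * K3form w1 (ze t))"
      using B_sym[of w1 "ze n1"] B_sym[of w1 "ze n2"]
      by (simp add: numer_def Qw1 zve q11_def q21_def a_def b_def; simp add: algebra_simps)
    then show ?thesis by (simp only:) (rule dvd_add[OF c1[where a=a and b=b]], simp)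
  qed
  have d2: "3 dvd K3form w2 (numer sw e v)"
  proof -
    have "K3form w2 (numer sw e v) = (if sw then a else b) + e * (a * q22 + b * q12) + 3 * (e * K3form w2 (ze t))"
      using B_sym[of w2 "ze n1"] B_sym[of w2 "ze n2"]
      by (simp add: numer_def Qw2 zve q12_def q22_def a_def b_def; simp add: algebra_simps)
    then show ?thesis by (simp only:) (rule dvd_add[OF c2[where a=a and b=b]], simp)
  qed
  have "\<forall>y\<in>K3vecs. 3 dvd K3form y (numer sw e v)"
  proof
    fix y assume yL: "y \<in> K3vecs"
    define s where "s = y - of_int (K3form y x2) * w2 - of_int (K3form y x1) * w1"
    have sN: "s \<in> N" using decomp[OF yL] unfolding s_def .
    have "K3form s (numer sw e v) = e * K3form s (ze (nv v))"
      by (simp add: numer_def QB'[OF sN])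
    moreover have "3 dvd K3form s (ze (nv v))" using zdiv[OF vL sN] B_sym[of s "ze (nv v)"] by simp
    ultimately have "3 dvd K3form s (numer sw e v)" by simp
    have "K3form y (numer sw e v) = K3form s (numer sw e v) + K3form y x2 * K3form w2 (numer sw e v)
      + K3form y x1 * K3form w1 (numer sw e v)" by (simp add: s_def)
    then show "3 dvd K3form y (numer sw e v)"
      using d1 d2 \<open>3 dvd K3form s (numer sw e v)\<close> by simp
  qed
  then show ?thesis using Ucor[OF numer_L[OF vL]] by blast
qed


lemma mult3_div: "(3 * r) = numer sw e v \<Longrightarrow> gmap sw e v = r"
  unfolding gmap_def by (rule ext) (metis (no_types) numeral_fun_apply times_fun_apply nonzero_mult_div_cancel_left zero_neq_numeral)

lemma exist_g:
  assumes e: "e = 1 \<or> e = -1"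
    and good: "\<And>v. v \<in> K3vecs \<Longrightarrow> \<exists>r\<in>K3vecs. numer sw e v = 3 * r"
  shows "is_isometry K3vecs (gmap sw e) \<and> gmap sw e (x1 + x2) = x1 + x2
     \<and> (\<forall>v\<in>N. gmap sw e v = of_int e * ze v)"
proof -
  define g where "g = gmap sw e"
  have ee: "e * e = 1" using e by auto
  have g3: "3 * g v = numer sw e v" and gL: "g v \<in> K3vecs" if vL: "v \<in> K3vecs" for v
  proof -
    obtain r where rL: "r \<in> K3vecs" and r: "numer sw e v = 3 * r" using good[OF vL] by blast
    have "g v = r" unfolding g_def by (rule mult3_div) (use r in simp)
    then show "3 * g v = numer sw e v" "g v \<in> K3vecs" using r rL by simp_all
  qed
  have gadd: "g (v + w) = g v + g w" if "v \<in> K3vecs" "w \<in> K3vecs" for v w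
  proof (rule cancel3)
    have "3 * g (v + w) = numer sw e (v + w)" using g3 that by blast
    also have "\<dots> = numer sw e v + numer sw e w" using numer_add that by blast
    also have "\<dots> = 3 * (g v + g w)" using g3 that by (simp add: distrib_left)
    finally show "3 * g (v + w) = 3 * (g v + g w)" .
  qed
  have numerB: "K3form (numer sw e v) (numer sw e w) = K3form (P v) (P w) + K3form (nv v) (nv w)"
    if "v \<in> K3vecs" "w \<in> K3vecs" for v w
  proof -
    have a: "K3form (Q sw v) (ze (nv w)) = 0" using QB zin nv_N that by blast
    have b: "K3form (ze (nv v)) (Q sw w) = 0" using QB' zin nv_N that by blast
    have c: "K3form (ze (nv v)) (ze (nv w)) = K3form (nv v) (nv w)" using zB nv_N that by blast
    show ?thesis
      by (simp add: numer_def a b c QQ; simp add: mult.assoc[symmetric] ee)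
  qed
  have threeB: "K3form (3 * v) (3 * w) = K3form (P v) (P w) + K3form (nv v) (nv w)"
    if "v \<in> K3vecs" "w \<in> K3vecs" for v w
  proof -
    have "K3form (3 * v) (3 * w) = K3form (P v + nv v) (P w + nv w)" using three_split by metis
    also have "\<dots> = K3form (P v) (P w) + K3form (nv v) (nv w)"
      using PB PB' nv_N that by simp
    finally show ?thesis .
  qed
  have gB: "K3form (g v) (g w) = K3form v w" if "v \<in> K3vecs" "w \<in> K3vecs" for v w
  proof -
    have "9 * K3form (g v) (g w) = K3form (3 * g v) (3 * g w)" by simp
    also have "\<dots> = K3form (3 * v) (3 * w)" using g3 that numerB threeB by simp
    also have "\<dots> = 9 * K3form v w" by simp
    finally show ?thesis by simp
  qed
  have inj: "inj_on g K3vecs"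
  proof (rule inj_onI)
    fix v w assume vL: "v \<in> K3vecs" and wL: "w \<in> K3vecs" and eq: "g v = g w"
    have dL: "v - w \<in> K3vecs" using vL wL by blast
    have gd: "g (v - w) = 0"
      using gadd[OF wL dL] eq by simp
    have "\<forall>u\<in>K3vecs. K3form u (v - w) = 0"
    proof
      fix u assume uL: "u \<in> K3vecs"
      have "K3form u (v - w) = K3form (g u) (g (v - w))" using gB[OF uL dL] by simp
      then show "K3form u (v - w) = 0" using gd by simp
    qed
    then have "v - w = 0" using ND dL by blast
    then show "v = w" by simp
  qed
  have surj: "\<exists>v\<in>K3vecs. g v = y" if yL: "y \<in> K3vecs" for y
  proof -
    obtain s' where s'N: "s' \<in> N" and s': "ze s' = nv y" using zsurj[OF nv_N[OF yL]] by blast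
    define u' where "u' = Q sw y + of_int e * s'"
    have u'L: "u' \<in> K3vecs" unfolding u'_def using Q_L NL[OF s'N] by blast
    have "\<forall>u\<in>K3vecs. 3 dvd K3form u u'"
    proof
      fix u assume uL: "u \<in> K3vecs"
      have "3 * K3form u u' = K3form (P u + nv u) u'" using three_split[of u] by (metis B_num1)
      also have "\<dots> = K3form (P u) (Q sw y) + e * K3form (nv u) s'"
        unfolding u'_def using PB[OF s'N] QB'[OF nv_N[OF uL]] by simp
      also have "K3form (nv u) s' = K3form (ze (nv u)) (nv y)" using zB[OF nv_N[OF uL] s'N] s' by simp
      also have "K3form (P u) (Q sw y) + e * K3form (ze (nv u)) (nv y) = K3form (numer sw e u) (P y + nv y)"
        using PQ[of u sw y] QB[OF nv_N[OF yL]] PB'[OF zin[OF nv_N[OF uL]]] by (simp add: numer_def)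
      also have "\<dots> = K3form (3 * g u) (3 * y)" using g3[OF uL] three_split[of y] by simp
      also have "\<dots> = 3 * (3 * K3form (g u) y)" by simp
      finally show "3 dvd K3form u u'" by simp
    qed
    then obtain v where vL: "v \<in> K3vecs" and v: "u' = 3 * v" using Ucor[OF u'L] B_sym by metis
    have Qv: "3 * Q sw v = 3 * P y"
    proof -
      have "3 * Q sw v = Q sw (3 * v)" using Q_int[of sw 3 v] by simp
      also have "\<dots> = Q sw u'" using v by simp
      also have "\<dots> = 3 * P y" unfolding u'_def using Q_add Q_int Q_N[OF s'N] QQ3 by simp
      finally show ?thesis .
    qed
    have nvv: "3 * nv v = 3 * (of_int e * s')"
    proof -
      have "3 * nv v = nv (3 * v)" using nv_int[of 3 v] by simp
      also have "\<dots> = 3 * u' - P u'" using v by (simp add: nv_def)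
      also have "\<dots> = 3 * (of_int e * s')" unfolding u'_def by (simp add: PQ3 P_N[OF s'N]; simp add: algebra_simps)
      finally show ?thesis .
    qed
    have "3 * (3 * g v) = 3 * (3 * y)"
    proof -
      have "3 * (3 * g v) = 3 * numer sw e v" using g3[OF vL] by simp
      also have "\<dots> = 3 * Q sw v + of_int e * ze (3 * nv v)"
        unfolding numer_def using znum[OF nv_N[OF vL]] by (simp add: algebra_simps)
      also have "\<dots> = 3 * P y + 3 * (of_int (e * e) * ze s')"
        using Qv nvv znum[OF N.Aint[OF s'N]] zint[OF s'N] by (simp add: mult.left_commute)
      also have "\<dots> = 3 * (3 * y)" using ee s' three_split[of y] by (simp add: distrib_left)
      finally show ?thesis .
    qed
    then have "g v = y" using cancel3 by blast
    then show ?thesis using vL by blast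
  qed
  have bij: "bij_betw g K3vecs K3vecs"
    unfolding bij_betw_def using inj gL surj by blast
  have iso_g: "is_isometry K3vecs g"
    unfolding is_isometry_def using bij gadd gB by simp
  have eta: "g (x1 + x2) = x1 + x2"
  proof (rule cancel3)
    have Qe: "Q sw (x1 + x2) = 3 * (x1 + x2)"
      by (cases sw; simp add: Q_def P_def Bx distrib_left)
    have nve: "nv (x1 + x2) = 0"
      by (simp add: nv_def P_def Bx distrib_left)
    show "3 * g (x1 + x2) = 3 * (x1 + x2)"
      using g3[OF L_add[OF x1L x2L]] Qe nve z0 by (simp add: numer_def)
  qed
  have onN: "g v = of_int e * ze v" if vN: "v \<in> N" for v
  proof (rule cancel3)
    have "nv v = 3 * v" by (simp add: nv_def P_N[OF vN])
    then show "3 * g v = 3 * (of_int e * ze v)"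
      using g3[OF NL[OF vN]] Q_N[OF vN] znum[OF vN] by (simp add: numer_def mult.left_commute)
  qed
  show ?thesis using iso_g eta onN unfolding g_def by blast
qed


lemma dvd_comb: "(3::int) dvd x \<Longrightarrow> 3 dvd y \<Longrightarrow> 3 dvd a * x + c * y" by simp

lemma existence:
  "extends_fixing N (vadd x1 x2) ze \<or> extends_fixing N (vadd x1 x2) (\<lambda>v. vneg (ze v))"
proof -
  obtain e where e: "e = 1 \<or> e = -1" and C: "(3 dvd q11 \<and> 3 dvd q22 \<and> 3 dvd 1 + e * q12 \<and> 3 dvd 1 + e * q21) \<or>
     (3 dvd q12 \<and> 3 dvd q21 \<and> 3 dvd 1 + e * q11 \<and> 3 dvd 1 + e * q22)"
    using classify[OF q_constraints] by blast
  define sw where "sw = (\<not> (3 dvd q11 \<and> 3 dvd q22 \<and> 3 dvd 1 + e * q12 \<and> 3 dvd 1 + e * q21))"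
  have c1: "3 dvd (if sw then b else a) + e * (a * q21 + b * q11)" for a b
  proof (cases sw)
    case False
    then have h: "3 dvd 1 + e * q21" "3 dvd q11" unfolding sw_def by simp_all
    have "(if sw then b else a) + e * (a * q21 + b * q11) = a * (1 + e * q21) + (e * b) * q11"
      using False by (simp add: algebra_simps)
    then show ?thesis using dvd_comb[OF h] by simp
  next
    case True
    then have h: "3 dvd 1 + e * q11" "3 dvd q21" using C unfolding sw_def by auto
    have "(if sw then b else a) + e * (a * q21 + b * q11) = b * (1 + e * q11) + (e * a) * q21"
      using True by (simp add: algebra_simps)
    then show ?thesis using dvd_comb[OF h] by simp
  qed
  have c2: "3 dvd (if sw then a else b) + e * (a * q22 + b * q12)" for a b
  proof (cases sw)
    case False
    then have h: "3 dvd 1 + e * q12" "3 dvd q22" unfolding sw_def by simp_all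
    have "(if sw then a else b) + e * (a * q22 + b * q12) = b * (1 + e * q12) + (e * a) * q22"
      using False by (simp add: algebra_simps)
    then show ?thesis using dvd_comb[OF h] by simp
  next
    case True
    then have h: "3 dvd 1 + e * q22" "3 dvd q12" using C unfolding sw_def by auto
    have "(if sw then a else b) + e * (a * q22 + b * q12) = a * (1 + e * q22) + (e * b) * q12"
      using True by (simp add: algebra_simps)
    then show ?thesis using dvd_comb[OF h] by simp
  qed
  have G: "is_isometry K3vecs (gmap sw e) \<and> gmap sw e (x1 + x2) = x1 + x2
     \<and> (\<forall>v\<in>N. gmap sw e v = of_int e * ze v)"
    by (rule exist_g[OF e good[OF c1 c2]])
  from e show ?thesis
  proof
    assume "e = 1"
    then have "extends_fixing N (vadd x1 x2) ze"
      unfolding extends_fixing_def using G by (intro exI[of _ "gmap sw e"]) simp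
    then show ?thesis ..
  next
    assume "e = -1"
    then have "extends_fixing N (vadd x1 x2) (\<lambda>v. vneg (ze v))"
      unfolding extends_fixing_def using G by (intro exI[of _ "gmap sw e"]) simp
    then show ?thesis ..
  qed
qed

end

theorem lemma7p9:
  fixes x1 x2 :: zvec and \<zeta> :: "zvec \<Rightarrow> zvec"
  assumes "x1 \<in> K3vecs" and "x2 \<in> K3vecs"
    and "K3form x1 x1 = 0" and "K3form x2 x2 = 0" and "K3form x1 x2 = 3"
    and "primitive_in_K3 (span2 x1 x2)"
    and "is_isometry (orth2 x1 x2) \<zeta>"
  shows "extends_fixing (orth2 x1 x2) (vadd x1 x2) \<zeta> \<noteq>
         extends_fixing (orth2 x1 x2) (vadd x1 x2) (\<lambda>v. vneg (\<zeta> v))"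
proof -
  interpret K3setup x1 x2 \<zeta> using assms by unfold_locales
  show ?thesis using existence uniq by blast
qed


end
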